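(* For real $\omega$ and $k\in\mathbb{Z}_+$ let $\mu_k(\omega)=\int_{-1}^1 x^k{\mathrm e}^{{\mathrm i}\omega x}\,\mathrm{d}x$, and for $n\geq 0$ let $h_n(\omega)=\det[\mu_{i+j}(\omega)]_{i,j=0}^{n}$ be the $(n+1)\times(n+1)$ Hankel determinant. Then there is no $n\geq 1$ and $\omega^*>0$ such that $h_{n-1}(\omega^* )=h_n(\omega^* )=0$. *)

theory Defs
  imports "HOL-Analysis.Analysis" "Jordan_Normal_Form.Determinant"
begin

definition moment :: "nat \<Rightarrow> real \<Rightarrow> complex" where
  "moment k \<omega> = integral {-1..1} (\<lambda>x::real. complex_of_real (x ^ k) * exp (\<i> * complex_of_real (\<omega> * x)))"

definition hankel_det :: "nat \<Rightarrow> real \<Rightarrow> complex" where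
  "hankel_det n \<omega> = det (mat (Suc n) (Suc n) (\<lambda>(i, j). moment (i + j) \<omega>))"

end

theory Submission imports Defs begin

definition Lf :: "real \<Rightarrow> complex poly \<Rightarrow> complex" where
 "Lf w p = integral {-1..1} (\<lambda>x::real. poly p (of_real x) * exp (\<i> * of_real (w*x)))"

lemma Lf_has_integral:
  "((\<lambda>x::real. poly p (of_real x) * exp (\<i> * of_real (w*x))) has_integral Lf w p) {-1..1}"
  unfolding Lf_def
  by (intro integrable_integral integrable_continuous_real continuous_intros)

lemma Lf_add: "Lf w (p + q) = Lf w p + Lf w q"
proof -
  have "((\<lambda>x::real. poly (p+q) (of_real x) * exp (\<i> * of_real (w*x))) has_integral (Lf w p + Lf w q)) {-1..1}"
    using has_integral_add[OF Lf_has_integral[of p w] Lf_has_integral[of q w]]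
    by (simp add: distrib_right)
  then show ?thesis using Lf_has_integral[of "p+q" w] has_integral_unique by blast
qed

lemma Lf_smult: "Lf w (Polynomial.smult c p) = c * Lf w p"
proof -
  have "((\<lambda>x::real. poly (Polynomial.smult c p) (of_real x) * exp (\<i> * of_real (w*x))) has_integral (c * Lf w p)) {-1..1}"
    using has_integral_mult_right[OF Lf_has_integral[of p w], of c]
    by (simp add: mult.assoc)
  then show ?thesis using Lf_has_integral[of "Polynomial.smult c p" w] has_integral_unique by blast
qed

lemma Lf_zero: "Lf w 0 = 0"
  by (simp add: Lf_def)

lemma Lf_sum: "Lf w (\<Sum>i\<in>A. f i) = (\<Sum>i\<in>A. Lf w (f i))"
  by (induction A rule: infinite_finite_induct) (auto simp: Lf_add Lf_zero)

lemma Lf_monom: "Lf w (monom 1 k) = moment k w"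
  unfolding Lf_def moment_def by (simp add: poly_monom)

lemma Lf_ibp: "Lf w (pderiv p) + \<i> * of_real w * Lf w p
   = poly p 1 * exp (\<i> * of_real w) - poly p (-1) * exp (- (\<i> * of_real w))"
proof -
  define g where "g z = poly p z * exp (\<i> * of_real w * z)" for z
  define g' where "g' z = poly (pderiv p) z * exp (\<i> * of_real w * z) + exp (\<i> * of_real w * z) * (\<i> * of_real w) * poly p z" for z
  have d: "(g has_field_derivative g' z) (at z)" for z
  proof -
    have e: "((\<lambda>z. exp (\<i> * of_real w * z)) has_field_derivative exp (\<i> * of_real w * z) * (\<i> * of_real w)) (at z)"
      by (rule DERIV_chain2[OF DERIV_exp]) (rule DERIV_cmult_Id)
    show ?thesis unfolding g_def g'_def using DERIV_mult[OF poly_DERIV[of p] e] by simp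
  qed
  have i1: "((\<lambda>x::real. g' (of_real x)) has_integral g (of_real 1) - g (of_real (-1))) {-1..1}"
    by (rule fundamental_theorem_of_calculus) (auto intro!: has_vector_derivative_real_field d)
  have eq: "(\<lambda>x::real. g' (of_real x)) = (\<lambda>x. poly (pderiv p) (of_real x) * exp (\<i> * of_real (w*x)) + \<i> * of_real w * (poly p (of_real x) * exp (\<i> * of_real (w*x))))"
    by (auto simp: g'_def algebra_simps)
  have i2: "((\<lambda>x::real. g' (of_real x)) has_integral (Lf w (pderiv p) + \<i> * of_real w * Lf w p)) {-1..1}"
    unfolding eq
    by (intro has_integral_add Lf_has_integral has_integral_mult_right)
  have "Lf w (pderiv p) + \<i> * of_real w * Lf w p = g (of_real 1) - g (of_real (-1))"
    using has_integral_unique[OF i2 i1] .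
  then show ?thesis by (simp add: g_def)
qed


lemma Lf_monom_gen: "Lf w (monom c k) = c * moment k w"
proof -
  have "monom c k = Polynomial.smult c (monom 1 k)" by (simp add: smult_monom)
  then show ?thesis by (simp add: Lf_smult Lf_monom)
qed

lemma Lf_mult_expand:
  assumes "degree p \<le> N"
  shows "Lf w (p * q) = (\<Sum>i\<le>N. coeff p i * Lf w (monom 1 i * q))"
proof -
  have "p * q = (\<Sum>i\<le>N. monom (coeff p i) i) * q"
    using poly_as_sum_of_monoms'[OF assms] by simp
  also have "\<dots> = (\<Sum>i\<le>N. Polynomial.smult (coeff p i) (monom 1 i * q))"
  proof -
    have m: "monom c i * q = Polynomial.smult c (monom 1 i * q)" for c i
      by (metis mult.right_neutral mult_smult_left smult_monom)
    show ?thesis unfolding sum_distrib_right by (rule sum.cong[OF refl m])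
  qed
  finally show ?thesis by (simp add: Lf_sum Lf_smult)
qed

definition ann :: "real \<Rightarrow> nat \<Rightarrow> complex poly \<Rightarrow> bool" where
  "ann w m q \<longleftrightarrow> (\<forall>k\<le>m. Lf w (monom 1 k * q) = 0)"

lemma ann_mult: "ann w m q \<Longrightarrow> degree p \<le> m \<Longrightarrow> Lf w (p * q) = 0"
  using Lf_mult_expand[of p m w q] unfolding ann_def by simp

lemma ann_step:
  assumes a: "ann w n Q" and d: "degree Q < n"
  shows "poly Q 1 = 0" "poly Q (-1) = 0" "ann w n (pderiv Q)"
proof -
  have ibp: "Lf w (pderiv f) + \<i> * of_real w * Lf w f
   = poly f 1 * exp (\<i> * of_real w) - poly f (-1) * exp (- (\<i> * of_real w))" for f
    by (rule Lf_ibp)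
  have key: "poly Q 1 * poly Q 1 * poly h 1 * exp (\<i> * of_real w) - poly Q (-1) * poly Q (-1) * poly h (-1) * exp (- (\<i> * of_real w)) = 0"
    if h: "degree h \<le> 1" for h
  proof -
    define f where "f = Q * (Q * h)"
    have dQh: "degree (Q * h) \<le> n"
      using degree_mult_le[of Q h] h d by linarith
    have dp: "degree (pderiv (Q * h)) \<le> n"
      using dQh degree_pderiv[of "Q*h"] by linarith
    have dp2: "degree (pderiv Q * h) \<le> n"
      using degree_mult_le[of "pderiv Q" h] degree_pderiv[of Q] h d by linarith
    have "pderiv f = pderiv (Q * h) * Q + (pderiv Q * h) * Q"
      unfolding f_def by (simp add: pderiv_mult algebra_simps)
    then have "Lf w (pderiv f) = 0"
      using ann_mult[OF a dp] ann_mult[OF a dp2] by (simp add: Lf_add)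
    moreover have "Lf w f = 0"
      unfolding f_def using ann_mult[OF a dQh] by (simp add: mult.commute)
    ultimately show ?thesis using ibp[of f] unfolding f_def by (simp add: algebra_simps)
  qed
  have e1: "exp (\<i> * of_real w) \<noteq> 0" "exp (- (\<i> * of_real w)) \<noteq> 0" by simp_all
  from key[of "[:1,1:]"] e1 show q1: "poly Q 1 = 0" by simp
  from key[of "[:1,-1:]"] e1 show q2: "poly Q (-1) = 0" by simp
  show "ann w n (pderiv Q)"
    unfolding ann_def
  proof (intro allI impI)
    fix k assume k: "k \<le> n"
    define f where "f = Q * monom 1 k"
    have dm: "degree (pderiv (monom (1::complex) k)) \<le> n"
      using degree_pderiv[of "monom (1::complex) k"] k by (simp add: degree_monom_eq)
    have "pderiv f = pderiv (monom 1 k) * Q + monom 1 k * pderiv Q"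
      unfolding f_def by (simp add: pderiv_mult algebra_simps)
    moreover have "Lf w f = 0"
      unfolding f_def using ann_mult[OF a, of "monom 1 k"] k by (simp add: mult.commute degree_monom_eq)
    ultimately show "Lf w (monom 1 k * pderiv Q) = 0"
      using ibp[of f] ann_mult[OF a dm] q1 q2 unfolding f_def by (simp add: Lf_add)
  qed
qed

lemma ann_zero:
  assumes "ann w n Q" "degree Q < n"
  shows "Q = 0"
  using assms
proof (induction "degree Q" arbitrary: Q rule: less_induct)
  case less
  show ?case
  proof (rule ccontr)
    assume nz: "Q \<noteq> 0"
    have q1: "poly Q 1 = 0" and an: "ann w n (pderiv Q)" using ann_step[OF less.prems] by auto
    have "degree Q \<noteq> 0"
    proof
      assume "degree Q = 0"
      then obtain c where "Q = [:c:]" by (metis degree_eq_zeroE)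
      then show False using nz q1 by simp
    qed
    then have "pderiv Q \<noteq> 0" by (simp add: pderiv_eq_0_iff)
    moreover have "degree (pderiv Q) < degree Q"
      using degree_pderiv[of Q] \<open>degree Q \<noteq> 0\<close> by simp
    ultimately show False
      using less.hyps[of "pderiv Q"] an less.prems(2) by simp
  qed
qed


lemma hankel_kernel:
  assumes "hankel_det m w = 0"
  shows "\<exists>q. q \<noteq> 0 \<and> degree q \<le> m \<and> ann w m q"
proof -
  define M where "M = mat (Suc m) (Suc m) (\<lambda>(i, j). moment (i + j) w)"
  have cM: "M \<in> carrier_mat (Suc m) (Suc m)" unfolding M_def by simp
  from assms det_0_iff_vec_prod_zero_field[OF cM] obtain v where
    v: "v \<in> carrier_vec (Suc m)" "v \<noteq> 0\<^sub>v (Suc m)" "M *\<^sub>v v = 0\<^sub>v (Suc m)"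
    unfolding hankel_det_def M_def by auto
  define q where "q = (\<Sum>j<Suc m. monom (v $ j) j)"
  have cq: "coeff q k = (if k < Suc m then v $ k else 0)" for k
    unfolding q_def by (simp add: coeff_sum coeff_monom)
  have dq: "degree q \<le> m"
    by (rule degree_le) (simp add: cq)
  have nz: "q \<noteq> 0"
  proof
    assume "q = 0"
    then have "v $ k = 0" if "k < Suc m" for k using cq[of k] that by simp
    then have "v = 0\<^sub>v (Suc m)" using v(1) by (intro eq_vecI) auto
    then show False using v(2) by simp
  qed
  have "Lf w (monom 1 k * q) = 0" if k: "k \<le> m" for k
  proof -
    have "Lf w (monom 1 k * q) = (\<Sum>j<Suc m. v $ j * moment (k + j) w)"
      unfolding q_def sum_distrib_left Lf_sum mult_monom Lf_monom_gen by simp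
    also have "\<dots> = (M *\<^sub>v v) $ k"
      using k v(1) unfolding M_def
      by (auto simp: scalar_prod_def mult.commute intro!: sum.cong)
    also have "\<dots> = 0" using v(3) k by simp
    finally show ?thesis .
  qed
  then show ?thesis using nz dq unfolding ann_def by blast
qed

theorem proposition4:
  "\<not> (\<exists>(n::nat) (\<omega>::real). n \<ge> 1 \<and> \<omega> > 0 \<and> hankel_det (n - 1) \<omega> = 0 \<and> hankel_det n \<omega> = 0)"
proof
  assume "\<exists>(n::nat) (\<omega>::real). n \<ge> 1 \<and> \<omega> > 0 \<and> hankel_det (n - 1) \<omega> = 0 \<and> hankel_det n \<omega> = 0"
  then obtain n w where n: "n \<ge> 1" and h1: "hankel_det (n - 1) w = 0" and h2: "hankel_det n w = 0"
    by blast
  obtain q where q: "q \<noteq> 0" "degree q \<le> n - 1" "ann w (n - 1) q"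
    using hankel_kernel[OF h1] by blast
  obtain R where R: "R \<noteq> 0" "degree R \<le> n" "ann w n R"
    using hankel_kernel[OF h2] by blast
  have dq: "degree q < n" using q(2) n by linarith
  show False
  proof (cases "Lf w (monom 1 n * q) = 0")
    case True
    have "ann w n q" unfolding ann_def
    proof (intro allI impI)
      fix k assume "k \<le> n"
      then consider "k \<le> n - 1" | "k = n" by linarith
      then show "Lf w (monom 1 k * q) = 0"
        using q(3) True unfolding ann_def by cases auto
    qed
    then show False using ann_zero[OF _ dq] q(1) by blast
  next
    case False
    have "Lf w (q * R) = 0" using ann_mult[OF R(3)] dq by simp
    moreover have "Lf w (R * q) = (\<Sum>i\<le>n. coeff R i * Lf w (monom 1 i * q))"
      by (rule Lf_mult_expand[OF R(2)])
    moreover have "(\<Sum>i\<le>n. coeff R i * Lf w (monom 1 i * q)) = coeff R n * Lf w (monom 1 n * q)"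
    proof -
      have "(\<Sum>i\<le>n. coeff R i * Lf w (monom 1 i * q)) = (\<Sum>i<n. coeff R i * Lf w (monom 1 i * q)) + coeff R n * Lf w (monom 1 n * q)"
        by (simp add: lessThan_Suc_atMost[symmetric])
      moreover have "(\<Sum>i<n. coeff R i * Lf w (monom 1 i * q)) = 0"
        using q(3) unfolding ann_def by (intro sum.neutral) auto
      ultimately show ?thesis by simp
    qed
    ultimately have "coeff R n = 0" using False by (simp add: mult.commute)
    then have "degree R \<noteq> n" using R(1) by (metis leading_coeff_0_iff)
    then have "degree R < n" using R(2) by linarith
    then show False using ann_zero[OF R(3)] R(1) by blast
  qed
qed

end
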